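(* Let $\rho$ be an $n$-qubit pure target state and let $\hat\sigma$ be an $n$-qubit state with $\mathrm{tr}_n[\rho]=\mathrm{tr}_n[\hat\sigma]$, where $\mathrm{tr}_n$ is the partial trace over the last qubit. Let $U=U_+e^{-i\theta_\mu H}U_-$ be a single-qubit parameterized circuit acting only on the last qubit, where $H$ is a Pauli matrix, and let $\sigma(\boldsymbol{\theta})=(I\otimes U)\hat\sigma(I\otimes U^\dagger)$ and $C_n(\boldsymbol{\theta})=\mathrm{tr}[(\rho-\sigma(\boldsymbol{\theta}))(\rho-\sigma(\boldsymbol{\theta}))^\dagger]$. If the circuit forms a unitary $2$-design (i.e. $U_+$ and $U_-$ are averaged independently over a unitary $2$-design / Haar measure on the last qubit), then $\mathbb{E}[\partial_\mu C_n]=0$ and $\mathrm{Var}[\partial_\mu C_n]\in\left[\frac{16}{27},\frac{8}{9}\right]$, where $\partial_\mu=\partial/\partial\theta_\mu$.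
   Context: A unitary $t$-design is a finite set of unitaries whose average of any homogeneous polynomial of degree at most $t$ in the entries of $U$ and $U^\dagger$ equals the Haar average. Here $I$ is the identity on the first $n-1$ qubits. *)

theory Defs
  imports "HOL-Analysis.Analysis"
begin

text \<open>Matrices are represented as functions nat => nat => complex together with an
explicit dimension d; only entries with indices below d are meaningful.
Qubit ordering: the last qubit is the least significant bit of the index, so a
2^n x 2^n matrix index i corresponds to (first n-1 qubits = i div 2, last qubit = i mod 2).\<close>

type_synonym cmat = "nat \<Rightarrow> nat \<Rightarrow> complex"

definition idm :: cmat where
  "idm i j = (if i = j then 1 else 0)"

definition mmul :: "nat \<Rightarrow> cmat \<Rightarrow> cmat \<Rightarrow> cmat" where
  "mmul d A B = (\<lambda>i j. \<Sum>k<d. A i k * B k j)"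

definition adj :: "cmat \<Rightarrow> cmat" where
  "adj A = (\<lambda>i j. cnj (A j i))"

definition mtrace :: "nat \<Rightarrow> cmat \<Rightarrow> complex" where
  "mtrace d A = (\<Sum>i<d. A i i)"

definition I_kron :: "cmat \<Rightarrow> cmat" where
  "I_kron U = (\<lambda>i j. if i div 2 = j div 2 then U (i mod 2) (j mod 2) else 0)"

definition ptrace_last :: "cmat \<Rightarrow> cmat" where
  "ptrace_last A = (\<lambda>i j. A (2*i) (2*j) + A (2*i+1) (2*j+1))"

definition pure_state :: "nat \<Rightarrow> cmat \<Rightarrow> bool" where
  "pure_state d \<rho> \<longleftrightarrow> (\<exists>v :: nat \<Rightarrow> complex. (\<Sum>i<d. (cmod (v i))\<^sup>2) = 1 \<and>
      (\<forall>i<d. \<forall>j<d. \<rho> i j = v i * cnj (v j)))"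

definition mat2 :: "cmat \<Rightarrow> bool" where
  "mat2 U \<longleftrightarrow> (\<forall>i j. (2 \<le> i \<or> 2 \<le> j) \<longrightarrow> U i j = 0)"

definition unitary2 :: "cmat \<Rightarrow> bool" where
  "unitary2 U \<longleftrightarrow> mat2 U \<and> (\<forall>i<2. \<forall>j<2. mmul 2 (adj U) U i j = idm i j)"

definition pauliX :: cmat where
  "pauliX i j = (if (i = 0 \<and> j = 1) \<or> (i = 1 \<and> j = 0) then 1 else 0)"

definition pauliY :: cmat where
  "pauliY i j = (if i = 0 \<and> j = 1 then - \<i> else if i = 1 \<and> j = 0 then \<i> else 0)"

definition pauliZ :: cmat where
  "pauliZ i j = (if i = 0 \<and> j = 0 then 1 else if i = 1 \<and> j = 1 then -1 else 0)"

definition is_pauli :: "cmat \<Rightarrow> bool" where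
  "is_pauli H \<longleftrightarrow> H = pauliX \<or> H = pauliY \<or> H = pauliZ"

text \<open>exp(-i theta H) for a Pauli matrix H (H^2 = I), written out: cos theta I - i sin theta H.\<close>
definition pauli_rot :: "cmat \<Rightarrow> real \<Rightarrow> cmat" where
  "pauli_rot H \<theta> = (\<lambda>i j. if i < 2 \<and> j < 2
      then complex_of_real (cos \<theta>) * idm i j - \<i> * complex_of_real (sin \<theta>) * H i j else 0)"

text \<open>Haar measure on U(2): U = e^{i phi} [[a, -conj b],[b, conj a]] with
(a,b) = (cos xi e^{i alpha}, sin xi e^{i beta}) uniform on S^3 (Hopf coordinates,
volume element sin xi cos xi), phi uniform on [0, 2 pi].\<close>
definition u2_param :: "real \<Rightarrow> real \<Rightarrow> real \<Rightarrow> real \<Rightarrow> cmat" where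
  "u2_param \<phi> \<xi> \<alpha> \<beta> = (\<lambda>i j. cis \<phi> *
     (if i = 0 \<and> j = 0 then complex_of_real (cos \<xi>) * cis \<alpha>
      else if i = 0 \<and> j = 1 then - complex_of_real (sin \<xi>) * cis (- \<beta>)
      else if i = 1 \<and> j = 0 then complex_of_real (sin \<xi>) * cis \<beta>
      else if i = 1 \<and> j = 1 then complex_of_real (cos \<xi>) * cis (- \<alpha>)
      else 0))"

definition haar_avg :: "(cmat \<Rightarrow> complex) \<Rightarrow> complex" where
  "haar_avg f = complex_of_real (1 / (4 * pi ^ 3)) *
     integral {0..2*pi} (\<lambda>\<phi>. integral {0..pi/2} (\<lambda>\<xi>.
       integral {0..2*pi} (\<lambda>\<alpha>. integral {0..2*pi} (\<lambda>\<beta>.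
         complex_of_real (sin \<xi> * cos \<xi>) * f (u2_param \<phi> \<xi> \<alpha> \<beta>)))))"

text \<open>Polynomials are linear combinations of these, so averaging identities
for all polynomials are equivalent to those for all monomials.\<close>
definition monomial :: "(nat \<times> nat) list \<Rightarrow> (nat \<times> nat) list \<Rightarrow> cmat \<Rightarrow> complex" where
  "monomial xs ys U = prod_list (map (\<lambda>(i,j). U i j) xs) * prod_list (map (\<lambda>(i,j). cnj (U i j)) ys)"

definition unitary_design :: "nat \<Rightarrow> cmat set \<Rightarrow> bool" where
  "unitary_design t D \<longleftrightarrow> finite D \<and> D \<noteq> {} \<and> (\<forall>U\<in>D. unitary2 U) \<and>
     (\<forall>xs ys. length xs \<le> t \<and> length ys \<le> t \<and> set xs \<subseteq> {0..<2} \<times> {0..<2} \<and>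
        set ys \<subseteq> {0..<2} \<times> {0..<2} \<longrightarrow>
        (\<Sum>U\<in>D. monomial xs ys U) / of_nat (card D) = haar_avg (monomial xs ys))"

definition evolve :: "nat \<Rightarrow> cmat \<Rightarrow> cmat \<Rightarrow> cmat" where
  "evolve n U \<sigma>h = mmul (2^n) (mmul (2^n) (I_kron U) \<sigma>h) (adj (I_kron U))"

text \<open>C = tr[(rho - sigma)(rho - sigma)^dagger] (a real number; we take its real part).\<close>
definition cost :: "nat \<Rightarrow> cmat \<Rightarrow> cmat \<Rightarrow> real" where
  "cost n \<rho> \<sigma> = Re (mtrace (2^n) (mmul (2^n) (\<lambda>i j. \<rho> i j - \<sigma> i j) (adj (\<lambda>i j. \<rho> i j - \<sigma> i j))))"

definition C_n :: "nat \<Rightarrow> cmat \<Rightarrow> cmat \<Rightarrow> cmat \<Rightarrow> cmat \<Rightarrow> cmat \<Rightarrow> real \<Rightarrow> real" where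
  "C_n n \<rho> \<sigma>h H Up Um \<theta> =
     cost n \<rho> (evolve n (mmul 2 (mmul 2 Up (pauli_rot H \<theta>)) Um) \<sigma>h)"

definition dC_n :: "nat \<Rightarrow> cmat \<Rightarrow> cmat \<Rightarrow> cmat \<Rightarrow> cmat \<Rightarrow> cmat \<Rightarrow> real \<Rightarrow> real" where
  "dC_n n \<rho> \<sigma>h H Up Um \<theta> = deriv (C_n n \<rho> \<sigma>h H Up Um) \<theta>"

definition expect2 :: "cmat set \<Rightarrow> (cmat \<Rightarrow> cmat \<Rightarrow> real) \<Rightarrow> real" where
  "expect2 D g = (\<Sum>Up\<in>D. \<Sum>Um\<in>D. g Up Um) / (real (card D))^2"

definition variance2 :: "cmat set \<Rightarrow> (cmat \<Rightarrow> cmat \<Rightarrow> real) \<Rightarrow> real" where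
  "variance2 D g = expect2 D (\<lambda>Up Um. (g Up Um)^2) - (expect2 D g)^2"

end

theory Submission
  imports Defs
begin

lemma int_cis:
  fixes l :: int
  shows "integral {0..2*pi} (\<lambda>x. cis (of_int l * x)) = (if l = 0 then 2*pi else 0)"
proof (cases "l = 0")
  case True then show ?thesis by (simp add: scaleR_conv_of_real)
next
  case False
  define f where "f x = cis (of_int l * x) / (\<i> * of_int l)" for x
  have d: "(f has_vector_derivative cis (of_int l * x)) (at x within {0..2*pi})" for x
  proof -
    have "((\<lambda>x. cis (of_int l * x)) has_derivative (\<lambda>t. (of_int l * t) *\<^sub>R (\<i> * cis (of_int l * x)))) (at x within {0..2*pi})"
      by (intro has_derivative_cis derivative_eq_intros) auto
    then have "((\<lambda>x. cis (of_int l * x)) has_vector_derivative (\<i> * of_int l * cis (of_int l * x))) (at x within {0..2*pi})"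
      unfolding has_vector_derivative_def
      by (rule has_derivative_eq_rhs) (auto simp: fun_eq_iff scaleR_conv_of_real)
    then have "(f has_vector_derivative (\<i> * of_int l * cis (of_int l * x)) / (\<i> * of_int l)) (at x within {0..2*pi})"
      unfolding f_def by (intro has_vector_derivative_divide)
    then show ?thesis using False by simp
  qed
  have "((\<lambda>x. cis (of_int l * x)) has_integral (f (2*pi) - f 0)) {0..2*pi}"
    by (rule fundamental_theorem_of_calculus) (auto intro: d)
  moreover have "f (2*pi) = f 0"
  proof -
    have "cis (of_int l * (2*pi)) = 1"
      by (metis cis_multiple_2pi mult.commute Ints_of_int)
    then show ?thesis unfolding f_def by simp
  qed
  ultimately show ?thesis using False by (simp add: integral_unique)
qed

definition ent_sg :: "nat \<times> nat \<Rightarrow> complex" where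
  "ent_sg p = (if p = (0,1) then -1 else 1)"
definition ent_c :: "nat \<times> nat \<Rightarrow> nat" where
  "ent_c p = (if fst p = snd p then 1 else 0)"
definition ent_s :: "nat \<times> nat \<Rightarrow> nat" where
  "ent_s p = (if fst p = snd p then 0 else 1)"
definition ent_m :: "nat \<times> nat \<Rightarrow> int" where
  "ent_m p = (if p = (0,0) then 1 else if p = (1,1) then -1 else 0)"
definition ent_l :: "nat \<times> nat \<Rightarrow> int" where
  "ent_l p = (if p = (0,1) then -1 else if p = (1,0) then 1 else 0)"

lemma u2_entry:
  assumes "p \<in> {0..<2} \<times> {0..<2}"
  shows "u2_param \<phi> \<xi> \<alpha> \<beta> (fst p) (snd p) = ent_sg p *
     complex_of_real (cos \<xi> ^ ent_c p * sin \<xi> ^ ent_s p) *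
     cis (\<phi> + of_int (ent_m p) * \<alpha> + of_int (ent_l p) * \<beta>)"
proof -
  obtain i j where p: "p = (i,j)" "i < 2" "j < 2" using assms by auto
  have "i = 0 \<or> i = 1" "j = 0 \<or> j = 1" using p by auto
  then show ?thesis using p
    by (auto simp: u2_param_def ent_sg_def ent_c_def ent_s_def ent_m_def ent_l_def
        cis_mult [symmetric] algebra_simps diff_conv_add_uminus)
qed

lemma prod_xs:
  assumes "set xs \<subseteq> {0..<2} \<times> {0..<2}"
  shows "prod_list (map (\<lambda>(i,j). u2_param \<phi> \<xi> \<alpha> \<beta> i j) xs) =
    prod_list (map ent_sg xs) *
    complex_of_real (cos \<xi> ^ sum_list (map ent_c xs) * sin \<xi> ^ sum_list (map ent_s xs)) *
    cis (of_nat (length xs) * \<phi> + of_int (sum_list (map ent_m xs)) * \<alpha> + of_int (sum_list (map ent_l xs)) * \<beta>)"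
  using assms
proof (induction xs)
  case Nil then show ?case by simp
next
  case (Cons p xs)
  have e: "u2_param \<phi> \<xi> \<alpha> \<beta> (fst p) (snd p) = ent_sg p *
     complex_of_real (cos \<xi> ^ ent_c p * sin \<xi> ^ ent_s p) *
     cis (\<phi> + of_int (ent_m p) * \<alpha> + of_int (ent_l p) * \<beta>)"
    using Cons.prems by (intro u2_entry) auto
  have "prod_list (map (\<lambda>(i,j). u2_param \<phi> \<xi> \<alpha> \<beta> i j) (p # xs)) =
     u2_param \<phi> \<xi> \<alpha> \<beta> (fst p) (snd p) * prod_list (map (\<lambda>(i,j). u2_param \<phi> \<xi> \<alpha> \<beta> i j) xs)"
    by (cases p) simp
  then show ?case unfolding e using Cons
    by (simp add: power_add cis_mult [symmetric] algebra_simps)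
qed

lemma prod_ys:
  assumes "set xs \<subseteq> {0..<2} \<times> {0..<2}"
  shows "prod_list (map (\<lambda>(i,j). cnj (u2_param \<phi> \<xi> \<alpha> \<beta> i j)) xs) =
    prod_list (map ent_sg xs) *
    complex_of_real (cos \<xi> ^ sum_list (map ent_c xs) * sin \<xi> ^ sum_list (map ent_s xs)) *
    cis (- (of_nat (length xs) * \<phi> + of_int (sum_list (map ent_m xs)) * \<alpha> + of_int (sum_list (map ent_l xs)) * \<beta>))"
proof -
  have "prod_list (map (\<lambda>(i,j). cnj (u2_param \<phi> \<xi> \<alpha> \<beta> i j)) xs) =
        cnj (prod_list (map (\<lambda>(i,j). u2_param \<phi> \<xi> \<alpha> \<beta> i j) xs))"
    by (induction xs) auto
  moreover have "cnj (prod_list (map ent_sg xs)) = prod_list (map ent_sg xs)"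
    by (induction xs) (auto simp: ent_sg_def)
  ultimately show ?thesis unfolding prod_xs[OF assms] by (simp add: cis_cnj)
qed

definition IC :: "int \<Rightarrow> complex" where "IC l = (if l = 0 then 2 * of_real pi else 0)"

lemma int_cis2:
  fixes l :: int
  shows "integral {0..2*pi} (\<lambda>x. c * cis (of_int l * x + a)) = c * cis a * IC l"
proof -
  have "(\<lambda>x. c * cis (of_int l * x + a)) = (\<lambda>x. (c * cis a) * cis (of_int l * x))"
    by (auto simp: cis_mult [symmetric] algebra_simps)
  then show ?thesis by (simp add: int_cis IC_def)
qed

definition Jint :: "nat \<Rightarrow> nat \<Rightarrow> real" where
  "Jint a b = integral {0..pi/2} (\<lambda>\<xi>. sin \<xi> * cos \<xi> * (cos \<xi> ^ a * sin \<xi> ^ b))"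

definition msg where "msg xs ys = prod_list (map ent_sg xs) * prod_list (map ent_sg ys)"
definition mA where "mA xs ys = sum_list (map ent_c xs) + sum_list (map ent_c ys)"
definition mB where "mB xs ys = sum_list (map ent_s xs) + sum_list (map ent_s ys)"
definition mK :: "(nat \<times> nat) list \<Rightarrow> (nat \<times> nat) list \<Rightarrow> int" where
  "mK xs ys = int (length xs) - int (length ys)"
definition mM where "mM xs ys = sum_list (map ent_m xs) - sum_list (map ent_m ys)"
definition mL where "mL xs ys = sum_list (map ent_l xs) - sum_list (map ent_l ys)"

lemma mono_u2:
  assumes "set xs \<subseteq> {0..<2} \<times> {0..<2}" "set ys \<subseteq> {0..<2} \<times> {0..<2}"
  shows "monomial xs ys (u2_param \<phi> \<xi> \<alpha> \<beta>) = msg xs ys *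
    complex_of_real (cos \<xi> ^ mA xs ys * sin \<xi> ^ mB xs ys) *
    cis (of_int (mK xs ys) * \<phi> + of_int (mM xs ys) * \<alpha> + of_int (mL xs ys) * \<beta>)"
proof -
  define X where "X = of_nat (length xs) * \<phi> + of_int (sum_list (map ent_m xs)) * \<alpha> + of_int (sum_list (map ent_l xs)) * \<beta>"
  define Y where "Y = of_nat (length ys) * \<phi> + of_int (sum_list (map ent_m ys)) * \<alpha> + of_int (sum_list (map ent_l ys)) * \<beta>"
  have c: "cis X * cis (- Y) = cis (of_int (mK xs ys) * \<phi> + of_int (mM xs ys) * \<alpha> + of_int (mL xs ys) * \<beta>)"
    unfolding cis_mult X_def Y_def mK_def mM_def mL_def by (simp add: algebra_simps)
  show ?thesis
    unfolding monomial_def prod_xs[OF assms(1)] prod_ys[OF assms(2)] msg_def mA_def mB_def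
      X_def[symmetric] Y_def[symmetric] c[symmetric]
    by (simp add: power_add)
qed

lemma haar_mono:
  assumes "set xs \<subseteq> {0..<2} \<times> {0..<2}" "set ys \<subseteq> {0..<2} \<times> {0..<2}"
  shows "haar_avg (monomial xs ys) = msg xs ys * complex_of_real (Jint (mA xs ys) (mB xs ys))
     * IC (mK xs ys) * IC (mM xs ys) * IC (mL xs ys) / complex_of_real (4 * pi ^ 3)"
proof -
  define S where "S = msg xs ys"
  define A where "A = mA xs ys"
  define B where "B = mB xs ys"
  define K where "K = mK xs ys"
  define M where "M = mM xs ys"
  define L where "L = mL xs ys"
  have step1: "integral {0..2*pi} (\<lambda>\<beta>. complex_of_real (sin \<xi> * cos \<xi>) * monomial xs ys (u2_param \<phi> \<xi> \<alpha> \<beta>))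
     = (complex_of_real (sin \<xi> * cos \<xi> * (cos \<xi> ^ A * sin \<xi> ^ B)) * S * IC L) * cis (of_int K * \<phi> + of_int M * \<alpha>)"
    for \<phi> \<xi> \<alpha>
  proof -
    have "(\<lambda>\<beta>. complex_of_real (sin \<xi> * cos \<xi>) * monomial xs ys (u2_param \<phi> \<xi> \<alpha> \<beta>)) =
      (\<lambda>\<beta>. (complex_of_real (sin \<xi> * cos \<xi> * (cos \<xi> ^ A * sin \<xi> ^ B)) * S) * cis (of_int L * \<beta> + (of_int K * \<phi> + of_int M * \<alpha>)))"
      unfolding mono_u2[OF assms] S_def A_def B_def K_def M_def L_def
      by (auto simp: algebra_simps)
    note eq = this
    show ?thesis unfolding eq int_cis2 by (simp add: algebra_simps)
  qed
  have step2: "integral {0..2*pi} (\<lambda>\<alpha>. integral {0..2*pi} (\<lambda>\<beta>. complex_of_real (sin \<xi> * cos \<xi>) * monomial xs ys (u2_param \<phi> \<xi> \<alpha> \<beta>)))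
     = complex_of_real (sin \<xi> * cos \<xi> * (cos \<xi> ^ A * sin \<xi> ^ B)) * (S * IC L * IC M * cis (of_int K * \<phi>))"
    for \<phi> \<xi>
    unfolding step1 using int_cis2[of "complex_of_real (sin \<xi> * cos \<xi> * (cos \<xi> ^ A * sin \<xi> ^ B)) * S * IC L" M "of_int K * \<phi>"]
    by (simp add: algebra_simps)
  have J: "integral {0..pi/2} (\<lambda>\<xi>. complex_of_real (sin \<xi> * cos \<xi> * (cos \<xi> ^ A * sin \<xi> ^ B))) = complex_of_real (Jint A B)"
  proof -
    have "((\<lambda>\<xi>. sin \<xi> * cos \<xi> * (cos \<xi> ^ A * sin \<xi> ^ B)) has_integral Jint A B) {0..pi/2}"
      unfolding Jint_def
      by (intro integrable_integral integrable_continuous_interval continuous_intros)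
    then have "((\<lambda>\<xi>. complex_of_real (sin \<xi> * cos \<xi> * (cos \<xi> ^ A * sin \<xi> ^ B))) has_integral complex_of_real (Jint A B)) {0..pi/2}"
      by (rule has_integral_of_real)
    then show ?thesis by (rule integral_unique)
  qed
  have step3: "integral {0..pi/2} (\<lambda>\<xi>. integral {0..2*pi} (\<lambda>\<alpha>. integral {0..2*pi} (\<lambda>\<beta>. complex_of_real (sin \<xi> * cos \<xi>) * monomial xs ys (u2_param \<phi> \<xi> \<alpha> \<beta>))))
     = (complex_of_real (Jint A B) * S * IC L * IC M) * cis (of_int K * \<phi> + 0)" for \<phi>
    unfolding step2 integral_mult_left J by (simp add: algebra_simps)
  show ?thesis
    unfolding haar_avg_def step3 int_cis2 S_def A_def B_def K_def M_def L_def
    by (simp add: field_simps)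
qed

lemma ftc_real:
  assumes "a \<le> b" "\<And>x. (F has_real_derivative f x) (at x)"
  shows "integral {a..b} f = F b - F a"
proof -
  have "(f has_integral (F b - F a)) {a..b}"
    by (rule fundamental_theorem_of_calculus[OF assms(1)])
       (meson assms(2) has_real_derivative_iff_has_vector_derivative has_vector_derivative_at_within)
  then show ?thesis by (rule integral_unique)
qed

lemma Jint_00: "Jint 0 0 = 1/2"
proof -
  have "Jint 0 0 = (\<lambda>x. sin x ^ 2 / 2) (pi/2) - (\<lambda>x. sin x ^ 2 / 2) 0"
    unfolding Jint_def
    by (rule ftc_real) (auto intro!: derivative_eq_intros simp: power2_eq_square)
  then show ?thesis by simp
qed

lemma Jint_20: "Jint 2 0 = 1/4"
proof -
  have "Jint 2 0 = (\<lambda>x. - (cos x ^ 4) / 4) (pi/2) - (\<lambda>x. - (cos x ^ 4) / 4) 0"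
    unfolding Jint_def
    by (rule ftc_real) (auto intro!: derivative_eq_intros simp: power2_eq_square eval_nat_numeral)
  then show ?thesis by simp
qed

lemma Jint_40: "Jint 4 0 = 1/6"
proof -
  have "Jint 4 0 = (\<lambda>x. - (cos x ^ 6) / 6) (pi/2) - (\<lambda>x. - (cos x ^ 6) / 6) 0"
    unfolding Jint_def
    by (rule ftc_real) (auto intro!: derivative_eq_intros simp: power2_eq_square eval_nat_numeral)
  then show ?thesis by simp
qed

lemma Jint_02: "Jint 0 2 = 1/4"
proof -
  have "Jint 0 2 = (\<lambda>x. sin x ^ 4 / 4) (pi/2) - (\<lambda>x. sin x ^ 4 / 4) 0"
    unfolding Jint_def
    by (rule ftc_real) (auto intro!: derivative_eq_intros simp: power2_eq_square eval_nat_numeral)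
  then show ?thesis by simp
qed

lemma Jint_04: "Jint 0 4 = 1/6"
proof -
  have "Jint 0 4 = (\<lambda>x. sin x ^ 6 / 6) (pi/2) - (\<lambda>x. sin x ^ 6 / 6) 0"
    unfolding Jint_def
    by (rule ftc_real) (auto intro!: derivative_eq_intros simp: power2_eq_square eval_nat_numeral)
  then show ?thesis by simp
qed

lemma Jint_22: "Jint 2 2 = 1/12"
proof -
  have "Jint 2 2 = (\<lambda>x. sin x ^ 4 / 4 - sin x ^ 6 / 6) (pi/2) - (\<lambda>x. sin x ^ 4 / 4 - sin x ^ 6 / 6) 0"
    unfolding Jint_def
  proof (rule ftc_real)
    fix x :: real
    have c: "cos x ^ 2 = 1 - sin x ^ 2" by (simp add: cos_squared_eq)
    show "((\<lambda>x. sin x ^ 4 / 4 - sin x ^ 6 / 6) has_real_derivative sin x * cos x * (cos x ^ 2 * sin x ^ 2)) (at x)"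
      using sin_cos_squared_add[of x]
      by (auto intro!: derivative_eq_intros simp: eval_nat_numeral) algebra
  qed simp
  then show ?thesis by simp
qed

lemma Jint_s: "Jint (Suc (Suc 0)) 0 = 1/4" "Jint 0 (Suc (Suc 0)) = 1/4"
  "Jint (Suc (Suc (Suc (Suc 0)))) 0 = 1/6" "Jint 0 (Suc (Suc (Suc (Suc 0)))) = 1/6"
  "Jint (Suc (Suc 0)) (Suc (Suc 0)) = 1/12"
  using Jint_20 Jint_02 Jint_40 Jint_04 Jint_22 by (simp_all add: numeral_eq_Suc)

definition avgD :: "cmat set \<Rightarrow> (cmat \<Rightarrow> complex) \<Rightarrow> complex" where
  "avgD D F = (\<Sum>U\<in>D. F U) / of_nat (card D)"

lemma IC3: "IC K * IC M * IC L / complex_of_real (4 * pi ^ 3) = (if K = 0 \<and> M = 0 \<and> L = 0 then 2 else 0)"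
  by (auto simp: IC_def field_simps power3_eq_cube)

lemma design_mono:
  assumes "unitary_design 2 D" "length xs \<le> 2" "length ys \<le> 2"
    "set xs \<subseteq> {0..<2} \<times> {0..<2}" "set ys \<subseteq> {0..<2} \<times> {0..<2}"
  shows "avgD D (monomial xs ys) = msg xs ys * complex_of_real (Jint (mA xs ys) (mB xs ys)) *
     (if mK xs ys = 0 \<and> mM xs ys = 0 \<and> mL xs ys = 0 then 2 else 0)"
proof -
  have "avgD D (monomial xs ys) = haar_avg (monomial xs ys)"
    using assms unfolding unitary_design_def avgD_def by blast
  also have "\<dots> = msg xs ys * complex_of_real (Jint (mA xs ys) (mB xs ys)) *
     (IC (mK xs ys) * IC (mM xs ys) * IC (mL xs ys) / complex_of_real (4 * pi ^ 3))"
    unfolding haar_mono[OF assms(4,5)] by simp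
  finally show ?thesis unfolding IC3 .
qed

lemma lt2: "(i::nat) < 2 \<Longrightarrow> i = 0 \<or> i = 1" by auto

definition dl :: "nat \<Rightarrow> nat \<Rightarrow> complex" where "dl i j = (if i = j then 1 else 0)"

lemma moment1:
  assumes "unitary_design 2 D" "i < 2" "j < 2" "k < 2" "l < 2"
  shows "avgD D (\<lambda>U. U i j * cnj (U k l)) = dl i k * dl j l / 2"
proof -
  have "avgD D (\<lambda>U. U i j * cnj (U k l)) = avgD D (monomial [(i,j)] [(k,l)])"
    by (rule arg_cong[where f="avgD D"]) (auto simp: fun_eq_iff monomial_def)
  also have "\<dots> = dl i k * dl j l / 2"
    using lt2[OF assms(2)] lt2[OF assms(3)] lt2[OF assms(4)] lt2[OF assms(5)]
    by (subst design_mono[OF assms(1)]; use assms in \<open>auto simp: msg_def mA_def mB_def mK_def mM_def mL_def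
        ent_sg_def ent_c_def ent_s_def ent_m_def ent_l_def dl_def Jint_s\<close>)
  finally show ?thesis .
qed

definition Wg where
  "Wg i1 j1 i2 j2 k1 l1 k2 l2 =
    (dl i1 k1 * dl i2 k2 * dl j1 l1 * dl j2 l2 + dl i1 k2 * dl i2 k1 * dl j1 l2 * dl j2 l1) / 3
  - (dl i1 k1 * dl i2 k2 * dl j1 l2 * dl j2 l1 + dl i1 k2 * dl i2 k1 * dl j1 l1 * dl j2 l2) / 6"

lemma moment2:
  assumes "unitary_design 2 D" "i1 < 2" "j1 < 2" "i2 < 2" "j2 < 2" "k1 < 2" "l1 < 2" "k2 < 2" "l2 < 2"
  shows "avgD D (\<lambda>U. U i1 j1 * U i2 j2 * cnj (U k1 l1) * cnj (U k2 l2)) = Wg i1 j1 i2 j2 k1 l1 k2 l2"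
proof -
  have "avgD D (\<lambda>U. U i1 j1 * U i2 j2 * cnj (U k1 l1) * cnj (U k2 l2)) = avgD D (monomial [(i1,j1),(i2,j2)] [(k1,l1),(k2,l2)])"
    by (rule arg_cong[where f="avgD D"]) (auto simp: fun_eq_iff monomial_def mult.assoc)
  also have "\<dots> = msg [(i1,j1),(i2,j2)] [(k1,l1),(k2,l2)] * complex_of_real (Jint (mA [(i1,j1),(i2,j2)] [(k1,l1),(k2,l2)]) (mB [(i1,j1),(i2,j2)] [(k1,l1),(k2,l2)])) *
     (if mK [(i1,j1),(i2,j2)] [(k1,l1),(k2,l2)] = 0 \<and> mM [(i1,j1),(i2,j2)] [(k1,l1),(k2,l2)] = 0 \<and> mL [(i1,j1),(i2,j2)] [(k1,l1),(k2,l2)] = 0 then 2 else 0)"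
    by (rule design_mono[OF assms(1)]) (use assms in auto)
  also have "\<dots> = Wg i1 j1 i2 j2 k1 l1 k2 l2"
    using lt2[OF assms(2)] lt2[OF assms(3)] lt2[OF assms(4)] lt2[OF assms(5)]
      lt2[OF assms(6)] lt2[OF assms(7)] lt2[OF assms(8)] lt2[OF assms(9)]
    by (elim disjE; simp add: msg_def mA_def mB_def mK_def mM_def mL_def
        ent_sg_def ent_c_def ent_s_def ent_m_def ent_l_def dl_def Wg_def Jint_s)
  finally show ?thesis .
qed


lemma mmul_assoc: "mmul d1 (mmul d2 A B) C = mmul d2 A (mmul d1 B C)"
  unfolding mmul_def
  by (auto simp: fun_eq_iff sum_distrib_left sum_distrib_right mult.assoc intro: sum.swap)

lemma adj_mmul: "adj (mmul d A B) = mmul d (adj B) (adj A)"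
  unfolding mmul_def adj_def by (auto simp: fun_eq_iff mult.commute)

lemma adj_adj[simp]: "adj (adj A) = A"
  unfolding adj_def by auto

lemma trace_comm: "mtrace d1 (mmul d2 A B) = mtrace d2 (mmul d1 B A)"
  unfolding mtrace_def mmul_def
  by (subst sum.swap) (simp add: mult.commute)

definition trU :: "cmat \<Rightarrow> cmat \<Rightarrow> complex" where
  "trU U A = mtrace 2 (mmul 2 U A)"

lemma avgD_sum: "finite S \<Longrightarrow> avgD D (\<lambda>U. \<Sum>x\<in>S. F x U) = (\<Sum>x\<in>S. avgD D (F x))"
  unfolding avgD_def by (subst sum.swap) (simp add: sum_divide_distrib)

lemma avgD_cmult: "avgD D (\<lambda>U. c * F U) = c * avgD D F"
  unfolding avgD_def by (simp add: sum_distrib_left)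

lemma avgD_add: "avgD D (\<lambda>U. F U + G U) = avgD D F + avgD D G"
  unfolding avgD_def by (simp add: sum.distrib add_divide_distrib)

lemma avgD_diff: "avgD D (\<lambda>U. F U - G U) = avgD D F - avgD D G"
  unfolding avgD_def by (simp add: sum_subtractf diff_divide_distrib)

lemma sum2: "(\<Sum>i<2. f i) = f 0 + f (1::nat)"
  by (simp add: numeral_2_eq_2)

lemma TF1:
  assumes "unitary_design 2 D"
  shows "avgD D (\<lambda>U. trU U A * cnj (trU U B)) = mtrace 2 (mmul 2 A (adj B)) / 2"
proof -
  have "avgD D (\<lambda>U. trU U A * cnj (trU U B)) =
     avgD D (\<lambda>U. \<Sum>i<2. \<Sum>j<2. \<Sum>k<2. \<Sum>l<2. (A j i * cnj (B l k)) * (U i j * cnj (U k l)))"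
    unfolding trU_def mtrace_def mmul_def
    by (rule arg_cong[where f="avgD D"]) (simp add: fun_eq_iff sum2 algebra_simps)
  also have "\<dots> = (\<Sum>i<2. \<Sum>j<2. \<Sum>k<2. \<Sum>l<2. (A j i * cnj (B l k)) * (dl i k * dl j l / 2))"
    by (simp add: avgD_sum avgD_cmult moment1[OF assms])
  also have "\<dots> = mtrace 2 (mmul 2 A (adj B)) / 2"
    unfolding mtrace_def mmul_def adj_def by (simp add: sum2 dl_def algebra_simps)
  finally show ?thesis .
qed

definition Phi :: "cmat \<Rightarrow> cmat \<Rightarrow> cmat \<Rightarrow> cmat \<Rightarrow> complex" where
  "Phi A B C E =
    (mtrace 2 (mmul 2 A (adj C)) * mtrace 2 (mmul 2 B (adj E)) + mtrace 2 (mmul 2 A (adj E)) * mtrace 2 (mmul 2 B (adj C))) / 3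
  - (mtrace 2 (mmul 2 (mmul 2 (mmul 2 A (adj C)) B) (adj E)) + mtrace 2 (mmul 2 (mmul 2 (mmul 2 A (adj E)) B) (adj C))) / 6"

lemma trU_sum: "trU U A = (\<Sum>i<2. \<Sum>j<2. U i j * A j i)"
  unfolding trU_def mtrace_def mmul_def ..

lemma TF2_expand:
  "trU U A * trU U B * cnj (trU U C) * cnj (trU U E) =
   (\<Sum>k2<2. \<Sum>l2<2. \<Sum>k1<2. \<Sum>l1<2. \<Sum>i2<2. \<Sum>j2<2. \<Sum>i1<2. \<Sum>j1<2.
     (A j1 i1 * B j2 i2 * cnj (C l1 k1) * cnj (E l2 k2)) * (U i1 j1 * U i2 j2 * cnj (U k1 l1) * cnj (U k2 l2)))"
  unfolding trU_sum cnj_sum sum_distrib_left sum_distrib_right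
  by (simp add: ac_simps)

lemma TF2:
  assumes "unitary_design 2 D"
  shows "avgD D (\<lambda>U. trU U A * trU U B * cnj (trU U C) * cnj (trU U E)) = Phi A B C E"
proof -
  have "avgD D (\<lambda>U. trU U A * trU U B * cnj (trU U C) * cnj (trU U E)) =
   (\<Sum>k2<2. \<Sum>l2<2. \<Sum>k1<2. \<Sum>l1<2. \<Sum>i2<2. \<Sum>j2<2. \<Sum>i1<2. \<Sum>j1<2.
     (A j1 i1 * B j2 i2 * cnj (C l1 k1) * cnj (E l2 k2)) * Wg i1 j1 i2 j2 k1 l1 k2 l2)"
    unfolding TF2_expand by (simp add: avgD_sum avgD_cmult moment2[OF assms])
  also have "\<dots> = Phi A B C E"
    unfolding Phi_def mtrace_def mmul_def adj_def by (simp add: sum2 dl_def Wg_def) (simp add: field_simps)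
  finally show ?thesis .
qed

definition trAUB :: "cmat \<Rightarrow> cmat \<Rightarrow> cmat \<Rightarrow> complex" where
  "trAUB U A B = mtrace 2 (mmul 2 (mmul 2 (mmul 2 A U) B) (adj U))"

lemma trAUB_sum: "trAUB U A B = (\<Sum>x<2. \<Sum>k<2. \<Sum>j<2. \<Sum>i<2. A x i * B j k * (U i j * cnj (U x k)))"
  unfolding trAUB_def mtrace_def mmul_def adj_def sum_distrib_left sum_distrib_right
  by (simp add: ac_simps)

definition Psi :: "cmat \<Rightarrow> cmat \<Rightarrow> cmat \<Rightarrow> cmat \<Rightarrow> complex" where
  "Psi A B C E =
    (mtrace 2 A * mtrace 2 B * mtrace 2 C * mtrace 2 E + mtrace 2 (mmul 2 A C) * mtrace 2 (mmul 2 B E)) / 3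
  - (mtrace 2 A * mtrace 2 C * mtrace 2 (mmul 2 B E) + mtrace 2 (mmul 2 A C) * mtrace 2 B * mtrace 2 E) / 6"

lemma TF3_expand:
  "trAUB U A B * trAUB U C E =
   (\<Sum>x'<2. \<Sum>k'<2. \<Sum>j'<2. \<Sum>i'<2. \<Sum>x<2. \<Sum>k<2. \<Sum>j<2. \<Sum>i<2.
     (A x i * B j k * C x' i' * E j' k') * (U i j * U i' j' * cnj (U x k) * cnj (U x' k')))"
  unfolding trAUB_sum sum_distrib_left sum_distrib_right
  by (simp add: ac_simps)

lemma TF3:
  assumes "unitary_design 2 D"
  shows "avgD D (\<lambda>U. trAUB U A B * trAUB U C E) = Psi A B C E"
proof -
  have "avgD D (\<lambda>U. trAUB U A B * trAUB U C E) =
   (\<Sum>x'<2. \<Sum>k'<2. \<Sum>j'<2. \<Sum>i'<2. \<Sum>x<2. \<Sum>k<2. \<Sum>j<2. \<Sum>i<2.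
     (A x i * B j k * C x' i' * E j' k') * Wg i j i' j' x k x' k')"
    unfolding TF3_expand by (simp add: avgD_sum avgD_cmult moment2[OF assms])
  also have "\<dots> = Psi A B C E"
    unfolding Psi_def mtrace_def mmul_def adj_def by (simp add: sum2 dl_def Wg_def) (simp add: field_simps)
  finally show ?thesis .
qed


lemma sum_split2: "(\<Sum>i<2*(d::nat). F i) = (\<Sum>a<d. F (2*a) + F (2*a+1))"
proof (induction d)
  case 0 then show ?case by simp
next
  case (Suc d)
  have "{..<2 * Suc d} = insert (2*d+1) (insert (2*d) {..<2*d})" by auto
  then show ?case using Suc by (simp add: ac_simps)
qed

definition wp :: "cmat \<Rightarrow> (nat \<Rightarrow> complex) \<Rightarrow> nat \<Rightarrow> complex" where
  "wp U w i = (\<Sum>t<2. U (i mod 2) t * w (2 * (i div 2) + t))"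

lemma ikron_apply:
  assumes "i < 2*d"
  shows "(\<Sum>l<2*d. I_kron U i l * w l) = wp U w i"
proof -
  have "(\<Sum>l<2*d. I_kron U i l * w l) =
     (\<Sum>a<d. (if i div 2 = a then U (i mod 2) 0 * w (2*a) + U (i mod 2) 1 * w (2*a+1) else 0))"
    unfolding sum_split2 by (rule sum.cong) (auto simp: I_kron_def)
  also have "\<dots> = U (i mod 2) 0 * w (2*(i div 2)) + U (i mod 2) 1 * w (2*(i div 2)+1)"
    using assms by (simp add: sum.delta)
  finally show ?thesis unfolding wp_def sum2 by simp
qed

lemma evolve_apply:
  assumes "i < 2*d" "j < 2*d" "2^n = 2*d"
    and sh: "\<forall>l<2*d. \<forall>k<2*d. \<sigma>h l k = w l * cnj (w k)"
  shows "evolve n U \<sigma>h i j = wp U w i * cnj (wp U w j)"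
proof -
  have "evolve n U \<sigma>h i j = (\<Sum>k<2*d. (\<Sum>l<2*d. I_kron U i l * (w l * cnj (w k))) * cnj (I_kron U j k))"
    unfolding evolve_def mmul_def adj_def assms(3) using sh by (intro sum.cong) auto
  also have "\<dots> = (\<Sum>k<2*d. wp U w i * cnj (I_kron U j k * w k))"
  proof (rule sum.cong)
    fix k assume "k \<in> {..<2*d}"
    have "(\<Sum>l<2*d. I_kron U i l * (w l * cnj (w k))) = (\<Sum>l<2*d. I_kron U i l * w l) * cnj (w k)"
      by (simp add: sum_distrib_right mult.assoc)
    then show "(\<Sum>l<2*d. I_kron U i l * (w l * cnj (w k))) * cnj (I_kron U j k) = wp U w i * cnj (I_kron U j k * w k)"
      using ikron_apply[OF assms(1)] by simp
  qed simp
  also have "\<dots> = wp U w i * cnj (\<Sum>k<2*d. I_kron U j k * w k)"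
    by (simp add: sum_distrib_left cnj_sum)
  finally show ?thesis using ikron_apply[OF assms(2)] by simp
qed

definition colorth :: "cmat \<Rightarrow> bool" where
  "colorth U \<longleftrightarrow> (\<forall>t<2. \<forall>t'<2. (\<Sum>s<2. cnj (U s t) * U s t') = idm t t')"

lemma wp_norm:
  assumes "colorth U"
  shows "(\<Sum>i<2*d. wp U w i * cnj (wp U w i)) = (\<Sum>i<2*d. w i * cnj (w i))"
proof -
  have h: "cnj (U 0 0) * U 0 0 + cnj (U 1 0) * U 1 0 = 1"
          "cnj (U 0 0) * U 0 1 + cnj (U 1 0) * U 1 1 = 0"
          "cnj (U 0 1) * U 0 0 + cnj (U 1 1) * U 1 0 = 0"
          "cnj (U 0 1) * U 0 1 + cnj (U 1 1) * U 1 1 = 1"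
    using assms unfolding colorth_def sum2 idm_def
    by (auto dest: spec[of _ 0] spec[of _ 1])
  show ?thesis unfolding sum_split2
  proof (rule sum.cong)
    fix a
    have e: "wp U w (2*a) = U 0 0 * w (2*a) + U 0 1 * w (2*a+1)"
            "wp U w (2*a+1) = U 1 0 * w (2*a) + U 1 1 * w (2*a+1)"
      unfolding wp_def sum2 by simp_all
    show "wp U w (2*a) * cnj (wp U w (2*a)) + wp U w (2*a+1) * cnj (wp U w (2*a+1)) =
          w (2*a) * cnj (w (2*a)) + w (2*a+1) * cnj (w (2*a+1))"
      unfolding e using h by simp algebra
  qed simp
qed

definition Xm :: "nat \<Rightarrow> (nat \<Rightarrow> complex) \<Rightarrow> (nat \<Rightarrow> complex) \<Rightarrow> cmat" where
  "Xm d v w = (\<lambda>t s. if t < 2 \<and> s < 2 then (\<Sum>a<d. w (2*a+t) * cnj (v (2*a+s))) else 0)"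

lemma overlap:
  "(\<Sum>i<2*d. cnj (v i) * wp U w i) = trU U (Xm d v w)"
  unfolding trU_sum Xm_def sum_split2 wp_def
  by (simp add: sum2) (simp add: sum_distrib_left sum.distrib algebra_simps)

lemma cost_eval:
  assumes "N = 2^n"
    and hv: "\<forall>i<N. \<forall>j<N. \<rho> i j = v i * cnj (v j)"
    and hs: "\<forall>i<N. \<forall>j<N. \<sigma> i j = u i * cnj (u j)"
    and nv: "(\<Sum>i<N. v i * cnj (v i)) = 1"
    and nu: "(\<Sum>i<N. u i * cnj (u i)) = 1"
  shows "cost n \<rho> \<sigma> = 2 - 2 * (cmod (\<Sum>i<N. cnj (v i) * u i))^2"
proof -
  define f where "f = (\<Sum>i<N. cnj (v i) * u i)"
  have cf: "cnj f = (\<Sum>i<N. v i * cnj (u i))" unfolding f_def cnj_sum by simp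
  have "mtrace (2^n) (mmul (2^n) (\<lambda>i j. \<rho> i j - \<sigma> i j) (adj (\<lambda>i j. \<rho> i j - \<sigma> i j))) =
    (\<Sum>i<N. \<Sum>k<N. (v i * cnj (v i)) * (v k * cnj (v k)) - (v i * cnj (u i)) * (cnj (v k) * u k)
        - (cnj (v i) * u i) * (v k * cnj (u k)) + (u i * cnj (u i)) * (u k * cnj (u k)))"
    unfolding mtrace_def mmul_def adj_def assms(1)[symmetric]
    using hv hs by (intro sum.cong refl) (simp add: algebra_simps)
  also have "\<dots> = (\<Sum>i<N. v i * cnj (v i)) * (\<Sum>k<N. v k * cnj (v k))
      - (\<Sum>i<N. v i * cnj (u i)) * (\<Sum>k<N. cnj (v k) * u k)
      - (\<Sum>i<N. cnj (v i) * u i) * (\<Sum>k<N. v k * cnj (u k))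
      + (\<Sum>i<N. u i * cnj (u i)) * (\<Sum>k<N. u k * cnj (u k))"
    by (simp add: sum_product sum.distrib sum_subtractf)
  also have "\<dots> = 2 - 2 * (f * cnj f)"
    unfolding nv nu cf[symmetric] f_def[symmetric] by simp
  also have "\<dots> = complex_of_real (2 - 2 * (cmod f)^2)"
    unfolding complex_norm_square[symmetric] by simp
  finally show ?thesis unfolding cost_def f_def[symmetric] by simp
qed


lemma mat2_mmul: "mat2 A \<Longrightarrow> mat2 B \<Longrightarrow> mat2 (mmul 2 A B)"
  unfolding mat2_def mmul_def by auto

lemma mat2_adj: "mat2 A \<Longrightarrow> mat2 (adj A)"
  unfolding mat2_def adj_def by auto

lemma mat2_pauli: "is_pauli H \<Longrightarrow> mat2 H"
  unfolding is_pauli_def mat2_def pauliX_def pauliY_def pauliZ_def by auto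

lemma mat2_rot: "mat2 (pauli_rot H \<theta>)"
  unfolding mat2_def pauli_rot_def by auto

lemma adj_pauli: "is_pauli H \<Longrightarrow> adj H = H"
  unfolding is_pauli_def adj_def pauliX_def pauliY_def pauliZ_def by (auto simp: fun_eq_iff)

lemma cancel_left:
  assumes "mat2 R" "\<forall>i<2. \<forall>j<2. mmul 2 (adj R) R i j = idm i j" "mat2 B"
  shows "mmul 2 (adj R) (mmul 2 R B) = B"
proof (intro ext)
  fix i j
  have "mmul 2 (adj R) (mmul 2 R B) i j = (\<Sum>l<2. mmul 2 (adj R) R i l * B l j)"
    using mmul_assoc[of 2 2 "adj R" R B] unfolding mmul_def by (metis (no_types))
  also have "\<dots> = B i j"
  proof (cases "i < 2")
    case True
    then have "(\<Sum>l<2. mmul 2 (adj R) R i l * B l j) = (\<Sum>l<2. idm i l * B l j)"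
      using assms(2) by (intro sum.cong) auto
    also have "\<dots> = B i j" using lt2[OF True] unfolding idm_def by (auto simp: sum2)
    finally show ?thesis .
  next
    case False
    then have "mmul 2 (adj R) R i l = 0" for l
      using assms(1) unfolding mmul_def adj_def mat2_def by auto
    then show ?thesis using False assms(3) unfolding mat2_def by simp
  qed
  finally show "mmul 2 (adj R) (mmul 2 R B) i j = B i j" .
qed

lemma trace_conj:
  assumes "\<forall>i<2. \<forall>j<2. mmul 2 (adj R) R i j = idm i j"
  shows "mtrace 2 (mmul 2 R (mmul 2 X (adj R))) = mtrace 2 X"
proof -
  have "mtrace 2 (mmul 2 R (mmul 2 X (adj R))) = mtrace 2 (mmul 2 (mmul 2 X (adj R)) R)"
    by (rule trace_comm)
  also have "\<dots> = mtrace 2 (mmul 2 X (mmul 2 (adj R) R))" by (simp add: mmul_assoc)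
  also have "\<dots> = (\<Sum>i<2. \<Sum>k<2. X i k * idm k i)"
    unfolding mtrace_def mmul_def using assms by (intro sum.cong refl) (auto simp: mmul_def)
  also have "\<dots> = mtrace 2 X" unfolding mtrace_def idm_def by (simp add: sum2)
  finally show ?thesis .
qed

lemma unitary2_mmul:
  assumes "unitary2 A" "unitary2 B"
  shows "unitary2 (mmul 2 A B)"
proof -
  have mA: "mat2 A" and mB: "mat2 B" using assms unfolding unitary2_def by auto
  have "mmul 2 (adj (mmul 2 A B)) (mmul 2 A B) = mmul 2 (adj B) (mmul 2 (adj A) (mmul 2 A B))"
    by (simp add: adj_mmul mmul_assoc)
  also have "\<dots> = mmul 2 (adj B) B"
    using cancel_left[OF mA _ mB] assms(1) unfolding unitary2_def by simp
  finally show ?thesis using assms mat2_mmul[OF mA mB] unfolding unitary2_def by simp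
qed

lemma unitary2_rot:
  assumes "is_pauli H"
  shows "unitary2 (pauli_rot H \<theta>)"
proof -
  have s: "cos \<theta> * cos \<theta> + sin \<theta> * sin \<theta> = 1"
    using sin_cos_squared_add[of \<theta>] by (simp add: power2_eq_square)
  have c: "complex_of_real (cos \<theta>) * complex_of_real (cos \<theta>) + complex_of_real (sin \<theta>) * complex_of_real (sin \<theta>) = 1"
    by (metis s of_real_1 of_real_add of_real_mult)
  show ?thesis
    unfolding unitary2_def using mat2_rot
    using assms unfolding is_pauli_def
    by (auto simp: mmul_def adj_def pauli_rot_def sum2 idm_def pauliX_def pauliY_def pauliZ_def
        lt2 algebra_simps c elim!: lt2[elim_format])
qed

lemma HH:
  assumes "is_pauli H" "mat2 B"
  shows "mmul 2 H (mmul 2 H B) = B"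
  using cancel_left[OF mat2_pauli[OF assms(1)] _ assms(2)] adj_pauli[OF assms(1)] assms(1)
  unfolding is_pauli_def
  by (auto simp: mmul_def pauliX_def pauliY_def pauliZ_def sum2 idm_def elim!: lt2[elim_format])


lemma unitary2_colorth: "unitary2 U \<Longrightarrow> colorth U"
  unfolding unitary2_def colorth_def mmul_def adj_def by simp

lemma rot_trU:
  "trU Up (mmul 2 (pauli_rot H t) Q) = complex_of_real (cos t) * trU Up Q - \<i> * complex_of_real (sin t) * trU Up (mmul 2 H Q)"
  unfolding trU_sum mmul_def pauli_rot_def by (simp add: sum2 idm_def algebra_simps)

lemma C_n_eq:
  assumes "2^n = 2*d"
    and hv: "\<forall>i<2*d. \<forall>j<2*d. \<rho> i j = v i * cnj (v j)"
    and hw: "\<forall>i<2*d. \<forall>j<2*d. \<sigma>h i j = w i * cnj (w j)"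
    and nv: "(\<Sum>i<2*d. v i * cnj (v i)) = 1"
    and nw: "(\<Sum>i<2*d. w i * cnj (w i)) = 1"
    and U: "unitary2 Up" "unitary2 Um" and H: "is_pauli H"
  shows "C_n n \<rho> \<sigma>h H Up Um t = 2 - 2 * (cmod (trU Up (mmul 2 (pauli_rot H t) (mmul 2 Um (Xm d v w)))))\<^sup>2"
proof -
  define W where "W = mmul 2 (mmul 2 Up (pauli_rot H t)) Um"
  have uW: "unitary2 W" unfolding W_def
    by (intro unitary2_mmul U unitary2_rot H)
  have ev: "\<forall>i<2*d. \<forall>j<2*d. evolve n W \<sigma>h i j = wp W w i * cnj (wp W w j)"
    using evolve_apply[OF _ _ assms(1) hw] by blast
  have nu: "(\<Sum>i<2*d. wp W w i * cnj (wp W w i)) = 1"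
    using wp_norm[OF unitary2_colorth[OF uW]] nw by simp
  have "C_n n \<rho> \<sigma>h H Up Um t = cost n \<rho> (evolve n W \<sigma>h)"
    unfolding C_n_def W_def ..
  also have "\<dots> = 2 - 2 * (cmod (\<Sum>i<2*d. cnj (v i) * wp W w i))^2"
    by (rule cost_eval[OF assms(1)[symmetric] hv ev nv nu])
  also have "(\<Sum>i<2*d. cnj (v i) * wp W w i) = trU W (Xm d v w)" by (rule overlap)
  also have "trU W (Xm d v w) = trU Up (mmul 2 (pauli_rot H t) (mmul 2 Um (Xm d v w)))"
    unfolding trU_def W_def by (simp add: mmul_assoc)
  finally show ?thesis .
qed

lemma deriv_formula:
  fixes F0 F1 :: complex
  assumes "\<And>t. C t = 2 - 2 * (cmod (complex_of_real (cos t) * F0 - \<i> * complex_of_real (sin t) * F1))\<^sup>2"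
  shows "complex_of_real (deriv C \<theta>) =
    2 * \<i> * (cnj (complex_of_real (cos \<theta>) * F0 - \<i> * complex_of_real (sin \<theta>) * F1) *
                (complex_of_real (cos \<theta>) * F1 - \<i> * complex_of_real (sin \<theta>) * F0)
           - (complex_of_real (cos \<theta>) * F0 - \<i> * complex_of_real (sin \<theta>) * F1) *
             cnj (complex_of_real (cos \<theta>) * F1 - \<i> * complex_of_real (sin \<theta>) * F0))"
proof -
  define a0 where "a0 = Re F0"
  define b0 where "b0 = Im F0"
  define a1 where "a1 = Re F1"
  define b1 where "b1 = Im F1"
  have Ceq: "C = (\<lambda>t. 2 - 2 * ((cos t * a0 + sin t * b1)^2 + (cos t * b0 - sin t * a1)^2))"
    unfolding assms cmod_power2 a0_def b0_def a1_def b1_def by (auto simp: fun_eq_iff)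
  have "((\<lambda>t. 2 - 2 * ((cos t * a0 + sin t * b1)^2 + (cos t * b0 - sin t * a1)^2)) has_real_derivative
     (- 2 * (2 * (cos \<theta> * a0 + sin \<theta> * b1) * (- sin \<theta> * a0 + cos \<theta> * b1)
            + 2 * (cos \<theta> * b0 - sin \<theta> * a1) * (- sin \<theta> * b0 - cos \<theta> * a1)))) (at \<theta>)"
    by (auto intro!: derivative_eq_intros simp: algebra_simps)
  then have "deriv C \<theta> = - 2 * (2 * (cos \<theta> * a0 + sin \<theta> * b1) * (- sin \<theta> * a0 + cos \<theta> * b1)
            + 2 * (cos \<theta> * b0 - sin \<theta> * a1) * (- sin \<theta> * b0 - cos \<theta> * a1))"
    unfolding Ceq by (rule DERIV_imp_deriv)
  then show ?thesis
    by (simp add: complex_eq_iff a0_def b0_def a1_def b1_def algebra_simps)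
qed


lemma tr_HKHK:
  assumes "is_pauli H"
  shows "mtrace 2 (mmul 2 H (mmul 2 K (mmul 2 H K))) =
    (mtrace 2 (mmul 2 H K))^2 + (mtrace 2 K)^2 - mtrace 2 (mmul 2 K K)"
  using assms unfolding is_pauli_def
  by (auto simp: mtrace_def mmul_def sum2 pauliX_def pauliY_def pauliZ_def power2_eq_square algebra_simps)

lemma Phi_reduce:
  assumes R: "mat2 R" "\<forall>i<2. \<forall>j<2. mmul 2 (adj R) R i j = idm i j"
    and H: "is_pauli H" and Q: "mat2 Q"
  defines "Y \<equiv> mmul 2 R Q" and "Z \<equiv> mmul 2 R (mmul 2 H Q)" and "K \<equiv> mmul 2 Q (adj Q)"
  shows "-4 * (Phi Z Z Y Y - 2 * Phi Y Z Y Z + Phi Y Y Z Z) =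
     4 * (mtrace 2 K)^2 - 8/3 * mtrace 2 (mmul 2 K K) - 4/3 * (mtrace 2 (mmul 2 H K))^2"
proof -
  have mH: "mat2 H" by (rule mat2_pauli[OF H])
  have aH: "adj H = H" by (rule adj_pauli[OF H])
  have cR: "mmul 2 (adj R) (mmul 2 R B) = B" if "mat2 B" for B
    by (rule cancel_left[OF R that])
  have cH: "mmul 2 H (mmul 2 H B) = B" if "mat2 B" for B
    by (rule HH[OF H that])
  have tc: "mtrace 2 (mmul 2 R (mmul 2 X (adj R))) = mtrace 2 X" for X
    by (rule trace_conj[OF R(2)])
  note simps = Y_def Z_def K_def adj_mmul mmul_assoc aH cR cH mat2_mmul mat2_adj mH Q R(1)
  have e1: "mtrace 2 (mmul 2 Z (adj Y)) = mtrace 2 (mmul 2 H K)"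
    using tc[of "mmul 2 H K"] by (simp add: simps)
  have e2: "mtrace 2 (mmul 2 Y (adj Z)) = mtrace 2 (mmul 2 H K)"
  proof -
    have "mtrace 2 (mmul 2 Y (adj Z)) = mtrace 2 (mmul 2 K H)"
      using tc[of "mmul 2 K H"] by (simp add: simps)
    then show ?thesis by (simp add: trace_comm)
  qed
  have e3: "mtrace 2 (mmul 2 Y (adj Y)) = mtrace 2 K"
    using tc[of "K"] by (simp add: simps)
  have e4: "mtrace 2 (mmul 2 Z (adj Z)) = mtrace 2 K"
  proof -
    have "mtrace 2 (mmul 2 Z (adj Z)) = mtrace 2 (mmul 2 H (mmul 2 K H))"
      using tc[of "mmul 2 H (mmul 2 K H)"] by (simp add: simps)
    also have "\<dots> = mtrace 2 (mmul 2 (mmul 2 H K) H)" by (simp add: mmul_assoc)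
    also have "\<dots> = mtrace 2 (mmul 2 H (mmul 2 H K))" by (rule trace_comm)
    also have "\<dots> = mtrace 2 K" by (simp add: simps)
    finally show ?thesis .
  qed
  have e5: "mtrace 2 (mmul 2 (mmul 2 (mmul 2 Z (adj Y)) Z) (adj Y)) = mtrace 2 (mmul 2 H (mmul 2 K (mmul 2 H K)))"
    using tc[of "mmul 2 H (mmul 2 K (mmul 2 H K))"] by (simp add: simps)
  have e6: "mtrace 2 (mmul 2 (mmul 2 (mmul 2 Y (adj Z)) Y) (adj Z)) = mtrace 2 (mmul 2 H (mmul 2 K (mmul 2 H K)))"
  proof -
    have "mtrace 2 (mmul 2 (mmul 2 (mmul 2 Y (adj Z)) Y) (adj Z)) = mtrace 2 (mmul 2 K (mmul 2 H (mmul 2 K H)))"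
      using tc[of "mmul 2 K (mmul 2 H (mmul 2 K H))"] by (simp add: simps)
    also have "\<dots> = mtrace 2 (mmul 2 (mmul 2 H (mmul 2 K H)) K)" by (rule trace_comm)
    finally show ?thesis by (simp add: mmul_assoc)
  qed
  have e7: "mtrace 2 (mmul 2 (mmul 2 (mmul 2 Y (adj Y)) Z) (adj Z)) = mtrace 2 (mmul 2 H (mmul 2 K (mmul 2 H K)))"
  proof -
    have "mtrace 2 (mmul 2 (mmul 2 (mmul 2 Y (adj Y)) Z) (adj Z)) = mtrace 2 (mmul 2 K (mmul 2 H (mmul 2 K H)))"
      using tc[of "mmul 2 K (mmul 2 H (mmul 2 K H))"] by (simp add: simps)
    also have "\<dots> = mtrace 2 (mmul 2 (mmul 2 H (mmul 2 K H)) K)" by (rule trace_comm)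
    finally show ?thesis by (simp add: mmul_assoc)
  qed
  have e8: "mtrace 2 (mmul 2 (mmul 2 (mmul 2 Y (adj Z)) Z) (adj Y)) = mtrace 2 (mmul 2 K K)"
    using tc[of "mmul 2 K K"] by (simp add: simps)
  show ?thesis
    unfolding Phi_def e1 e2 e3 e4 e5 e6 e7 e8 tr_HKHK[OF H]
    by (simp add: algebra_simps power2_eq_square)
qed


lemma avgD_cong: "(\<And>U. U \<in> D \<Longrightarrow> F U = G U) \<Longrightarrow> avgD D F = avgD D G"
  unfolding avgD_def by (metis (no_types, lifting) sum.cong)

lemma avgD_const: "finite D \<Longrightarrow> D \<noteq> {} \<Longrightarrow> avgD D (\<lambda>U. c) = c"
  unfolding avgD_def by simp

lemma expect2_avg:
  "complex_of_real (expect2 D f) = avgD D (\<lambda>Um. avgD D (\<lambda>Up. complex_of_real (f Up Um)))"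
proof -
  have "avgD D (\<lambda>Um. avgD D (\<lambda>Up. complex_of_real (f Up Um))) =
        (\<Sum>Um\<in>D. \<Sum>Up\<in>D. complex_of_real (f Up Um)) / (of_nat (card D))^2"
    unfolding avgD_def by (simp add: sum_divide_distrib[symmetric] power2_eq_square)
  also have "\<dots> = (\<Sum>Up\<in>D. \<Sum>Um\<in>D. complex_of_real (f Up Um)) / (of_nat (card D))^2"
    by (subst sum.swap) simp
  also have "\<dots> = complex_of_real (expect2 D f)"
    unfolding expect2_def by simp
  finally show ?thesis ..
qed

lemma tr_sym:
  assumes R: "mat2 R" "\<forall>i<2. \<forall>j<2. mmul 2 (adj R) R i j = idm i j"
    and H: "is_pauli H" and Q: "mat2 Q"
  defines "Y \<equiv> mmul 2 R Q" and "Z \<equiv> mmul 2 R (mmul 2 H Q)"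
  shows "mtrace 2 (mmul 2 Z (adj Y)) = mtrace 2 (mmul 2 Y (adj Z))"
proof -
  define K where "K = mmul 2 Q (adj Q)"
  have mH: "mat2 H" by (rule mat2_pauli[OF H])
  have aH: "adj H = H" by (rule adj_pauli[OF H])
  have tc: "mtrace 2 (mmul 2 R (mmul 2 X (adj R))) = mtrace 2 X" for X
    by (rule trace_conj[OF R(2)])
  note simps = Y_def Z_def K_def adj_mmul mmul_assoc aH mat2_mmul mat2_adj mH Q R(1)
  have e1: "mtrace 2 (mmul 2 Z (adj Y)) = mtrace 2 (mmul 2 H K)"
    using tc[of "mmul 2 H K"] by (simp add: simps)
  have "mtrace 2 (mmul 2 Y (adj Z)) = mtrace 2 (mmul 2 K H)"
    using tc[of "mmul 2 K H"] by (simp add: simps)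
  then show ?thesis using e1 by (simp add: trace_comm)
qed

lemma mean_zero:
  assumes "unitary_design 2 D"
    and "mtrace 2 (mmul 2 Z (adj Y)) = mtrace 2 (mmul 2 Y (adj Z))"
  shows "avgD D (\<lambda>Up. 2 * \<i> * (cnj (trU Up Y) * trU Up Z - trU Up Y * cnj (trU Up Z))) = 0"
proof -
  have "avgD D (\<lambda>Up. 2 * \<i> * (cnj (trU Up Y) * trU Up Z - trU Up Y * cnj (trU Up Z))) =
      2 * \<i> * (avgD D (\<lambda>Up. trU Up Z * cnj (trU Up Y)) - avgD D (\<lambda>Up. trU Up Y * cnj (trU Up Z)))"
    by (simp add: avgD_cmult avgD_diff mult.commute)
  also have "\<dots> = 0" unfolding TF1[OF assms(1)] assms(2) by simp
  finally show ?thesis .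
qed

lemma second_moment:
  assumes "unitary_design 2 D"
  shows "avgD D (\<lambda>Up. (2 * \<i> * (cnj (trU Up Y) * trU Up Z - trU Up Y * cnj (trU Up Z)))^2) =
     -4 * (Phi Z Z Y Y - 2 * Phi Y Z Y Z + Phi Y Y Z Z)"
proof -
  have "avgD D (\<lambda>Up. (2 * \<i> * (cnj (trU Up Y) * trU Up Z - trU Up Y * cnj (trU Up Z)))^2) =
    avgD D (\<lambda>Up. -4 * ((trU Up Z * trU Up Z * cnj (trU Up Y) * cnj (trU Up Y)
        - 2 * (trU Up Y * trU Up Z * cnj (trU Up Y) * cnj (trU Up Z)))
        + trU Up Y * trU Up Y * cnj (trU Up Z) * cnj (trU Up Z)))"
    by (rule arg_cong[where f="avgD D"]) (simp add: fun_eq_iff power2_eq_square algebra_simps)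
  also have "\<dots> = -4 * (Phi Z Z Y Y - 2 * Phi Y Z Y Z + Phi Y Y Z Z)"
    by (simp add: avgD_cmult avgD_diff avgD_add TF2[OF assms])
  finally show ?thesis .
qed

lemma K_traces:
  assumes U: "unitary2 Um" and X: "mat2 X"
  defines "K \<equiv> mmul 2 (mmul 2 Um X) (adj (mmul 2 Um X))" and "P \<equiv> mmul 2 X (adj X)"
  shows "mtrace 2 K = mtrace 2 P" "mtrace 2 (mmul 2 K K) = mtrace 2 (mmul 2 P P)"
    "mtrace 2 (mmul 2 H K) = trAUB Um H P"
proof -
  have mU: "mat2 Um" and uU: "\<forall>i<2. \<forall>j<2. mmul 2 (adj Um) Um i j = idm i j"
    using U unfolding unitary2_def by auto
  have cU: "mmul 2 (adj Um) (mmul 2 Um B) = B" if "mat2 B" for B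
    by (rule cancel_left[OF mU uU that])
  have tc: "mtrace 2 (mmul 2 Um (mmul 2 Y (adj Um))) = mtrace 2 Y" for Y
    by (rule trace_conj[OF uU])
  note simps = K_def P_def adj_mmul mmul_assoc cU mat2_mmul mat2_adj mU X
  show "mtrace 2 K = mtrace 2 P"
    using tc[of P] by (simp add: simps)
  show "mtrace 2 (mmul 2 K K) = mtrace 2 (mmul 2 P P)"
    using tc[of "mmul 2 P P"] by (simp add: simps)
  show "mtrace 2 (mmul 2 H K) = trAUB Um H P"
    unfolding trAUB_def by (simp add: simps)
qed

lemma Psi_HP:
  assumes "is_pauli H"
  shows "Psi H P H P = 2/3 * mtrace 2 (mmul 2 P P) - 1/3 * (mtrace 2 P)^2"
proof -
  have "mtrace 2 H = 0" "mtrace 2 (mmul 2 H H) = 2"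
    using assms unfolding is_pauli_def
    by (auto simp: mtrace_def mmul_def sum2 pauliX_def pauliY_def pauliZ_def)
  then show ?thesis unfolding Psi_def by (simp add: power2_eq_square)
qed

lemma cauchy_schwarz_c:
  fixes x y :: "nat \<Rightarrow> complex"
  shows "(cmod (\<Sum>a<d. x a * cnj (y a)))^2 \<le> (\<Sum>a<d. (cmod (x a))^2) * (\<Sum>a<d. (cmod (y a))^2)"
proof -
  define X where "X = (\<Sum>a<d. (cmod (x a))^2)"
  define Y where "Y = (\<Sum>a<d. (cmod (y a))^2)"
  define c where "c = (\<Sum>a<d. x a * cnj (y a))"
  have sx: "(\<Sum>a<d. x a * cnj (x a)) = complex_of_real X"
    unfolding X_def of_real_sum complex_norm_square by (rule refl)
  have sy: "(\<Sum>a<d. y a * cnj (y a)) = complex_of_real Y"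
    unfolding Y_def of_real_sum complex_norm_square by (rule refl)
  have sc: "(\<Sum>a<d. y a * cnj (x a)) = cnj c"
    unfolding c_def cnj_sum by (simp add: mult.commute)
  have "complex_of_real (\<Sum>a<d. (cmod (complex_of_real Y * x a - c * y a))^2) =
     (\<Sum>a<d. (complex_of_real Y * x a - c * y a) * cnj (complex_of_real Y * x a - c * y a))"
    unfolding of_real_sum complex_norm_square by (rule refl)
  also have "\<dots> = complex_of_real Y * complex_of_real Y * (\<Sum>a<d. x a * cnj (x a))
      - complex_of_real Y * cnj c * (\<Sum>a<d. x a * cnj (y a))
      - c * complex_of_real Y * (\<Sum>a<d. y a * cnj (x a))
      + c * cnj c * (\<Sum>a<d. y a * cnj (y a))"
    by (simp add: sum_distrib_left sum_subtractf sum.distrib algebra_simps)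
  also have "\<dots> = complex_of_real (Y * (X * Y - (cmod c)^2))"
  proof -
    have cc: "c * cnj c = complex_of_real ((cmod c)^2)" by (rule complex_norm_square[symmetric])
    show ?thesis unfolding sx sy sc c_def[symmetric]
      by (simp add: algebra_simps power2_eq_square cc[unfolded power2_eq_square])
  qed
  finally have "Y * (X * Y - (cmod c)^2) = (\<Sum>a<d. (cmod (complex_of_real Y * x a - c * y a))^2)"
    by (metis of_real_eq_iff)
  also have "\<dots> \<ge> 0" by (intro sum_nonneg) simp
  finally have nn: "Y * (X * Y - (cmod c)^2) \<ge> 0" .
  have Y0: "Y \<ge> 0" unfolding Y_def by (intro sum_nonneg) simp
  show ?thesis
  proof (cases "Y = 0")
    case True
    then have "\<forall>a\<in>{..<d}. (cmod (y a))^2 = 0"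
      unfolding Y_def by (subst sum_nonneg_eq_0_iff[symmetric]) auto
    then have "c = 0" unfolding c_def by (intro sum.neutral) auto
    then show ?thesis using True X_def Y_def c_def by simp
  next
    case False
    with Y0 nn have "X * Y - (cmod c)^2 \<ge> 0" by (simp add: zero_le_mult_iff)
    then show ?thesis unfolding X_def Y_def c_def by simp
  qed
qed


lemma dC_eq:
  fixes \<theta> :: real and Um :: cmat
  assumes "2^n = 2*d"
    and hv: "\<forall>i<2*d. \<forall>j<2*d. \<rho> i j = v i * cnj (v j)"
    and hw: "\<forall>i<2*d. \<forall>j<2*d. \<sigma>h i j = w i * cnj (w j)"
    and nv: "(\<Sum>i<2*d. v i * cnj (v i)) = 1"
    and nw: "(\<Sum>i<2*d. w i * cnj (w i)) = 1"
    and U: "unitary2 Up" "unitary2 Um" and H: "is_pauli H"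
  defines "Y \<equiv> mmul 2 (pauli_rot H \<theta>) (mmul 2 Um (Xm d v w))"
    and "Z \<equiv> mmul 2 (pauli_rot H \<theta>) (mmul 2 H (mmul 2 Um (Xm d v w)))"
  shows "complex_of_real (dC_n n \<rho> \<sigma>h H Up Um \<theta>) =
    2 * \<i> * (cnj (trU Up Y) * trU Up Z - trU Up Y * cnj (trU Up Z))"
proof -
  define Q where "Q = mmul 2 Um (Xm d v w)"
  have mQ: "mat2 Q" unfolding Q_def
    using U(2) by (intro mat2_mmul) (auto simp: unitary2_def mat2_def Xm_def)
  define F0 where "F0 = trU Up Q"
  define F1 where "F1 = trU Up (mmul 2 H Q)"
  have Ct: "C_n n \<rho> \<sigma>h H Up Um t = 2 - 2 * (cmod (complex_of_real (cos t) * F0 - \<i> * complex_of_real (sin t) * F1))\<^sup>2" for t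
    unfolding C_n_eq[OF assms(1) hv hw nv nw U H] rot_trU F0_def F1_def Q_def ..
  have a: "trU Up Y = complex_of_real (cos \<theta>) * F0 - \<i> * complex_of_real (sin \<theta>) * F1"
    unfolding Y_def Q_def[symmetric] rot_trU F0_def F1_def ..
  have b: "trU Up Z = complex_of_real (cos \<theta>) * F1 - \<i> * complex_of_real (sin \<theta>) * F0"
    unfolding Z_def Q_def[symmetric] rot_trU F0_def F1_def HH[OF H mQ] ..
  show ?thesis unfolding dC_n_def a b
    by (rule deriv_formula) (rule Ct)
qed

lemma P_eq:
  assumes hyp: "\<forall>a<d. \<forall>b<d. (\<Sum>s<2. v (2*b+s) * cnj (v (2*a+s))) = (\<Sum>s<2. w (2*b+s) * cnj (w (2*a+s)))"
  shows "mmul 2 (Xm d v w) (adj (Xm d v w)) = mmul 2 (Xm d w w) (Xm d w w)"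
proof (intro ext)
  fix i j :: nat
  show "mmul 2 (Xm d v w) (adj (Xm d v w)) i j = mmul 2 (Xm d w w) (Xm d w w) i j"
  proof (cases "i < 2 \<and> j < 2")
    case True
    have L: "mmul 2 (Xm d v w) (adj (Xm d v w)) i j =
      (\<Sum>a<d. \<Sum>b<d. (w (2*a+i) * cnj (w (2*b+j))) * (\<Sum>s<2. v (2*b+s) * cnj (v (2*a+s))))"
      using True unfolding mmul_def adj_def Xm_def
      by (simp add: sum2 cnj_sum sum_distrib_left sum_distrib_right sum.distrib algebra_simps)
    have R: "mmul 2 (Xm d w w) (Xm d w w) i j =
      (\<Sum>a<d. \<Sum>b<d. (w (2*a+i) * cnj (w (2*b+j))) * (\<Sum>s<2. w (2*b+s) * cnj (w (2*a+s))))"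
      using True unfolding mmul_def Xm_def
      by (simp add: sum2 sum_distrib_left sum_distrib_right sum.distrib algebra_simps)
    show ?thesis unfolding L R using hyp by (intro sum.cong refl) auto
  next
    case False
    then show ?thesis unfolding mmul_def adj_def Xm_def by auto
  qed
qed


lemma final_ineq:
  fixes x y z :: real
  assumes "x \<ge> 0" "y \<ge> 0" "x + y = 1" "0 \<le> z" "z \<le> x * y"
  defines "T \<equiv> x^2 + y^2 + 2*z"
  shows "16/27 \<le> 40/9 * T^2 - 32/9 * (T^2 - 2 * (x*y - z)^2) \<and>
         40/9 * T^2 - 32/9 * (T^2 - 2 * (x*y - z)^2) \<le> 8/9"
proof -
  define q where "q = x*y - z"
  have q0: "q \<ge> 0" using assms unfolding q_def by simp
  have xy: "x * y \<le> 1/4"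
  proof -
    have "(x - y)^2 \<ge> 0" by simp
    then have "(x+y)^2 - 4*(x*y) \<ge> 0" by (simp add: power2_eq_square algebra_simps)
    then show ?thesis using assms(3) by simp
  qed
  have q1: "q \<le> 1/4" using xy assms(4) unfolding q_def by simp
  have T: "T = 1 - 2*q"
  proof -
    have "T = (x+y)^2 - 2*(x*y - z)" unfolding T_def by (simp add: power2_eq_square algebra_simps)
    then show ?thesis using assms(3) unfolding q_def by simp
  qed
  have v: "40/9 * T^2 - 32/9 * (T^2 - 2 * (x*y - z)^2) = 8/9 - 32/9 * q + 32/3 * q^2"
    unfolding T q_def[symmetric] by (simp add: power2_eq_square algebra_simps)
  have l: "16/27 \<le> 8/9 - 32/9 * q + 32/3 * q^2"
  proof -
    have "0 \<le> 32/3 * (q - 1/6)^2" by simp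
    then show ?thesis by (simp add: power2_eq_square algebra_simps)
  qed
  have u: "8/9 - 32/9 * q + 32/3 * q^2 \<le> 8/9"
  proof -
    have "0 \<le> q * (1 - 3*q)" using q0 q1 by (intro mult_nonneg_nonneg) auto
    then show ?thesis by (simp add: power2_eq_square algebra_simps)
  qed
  show ?thesis unfolding v using l u by simp
qed

lemma G_traces:
  fixes d :: nat and w :: "nat \<Rightarrow> complex"
  defines "G \<equiv> Xm d w w"
    and "x \<equiv> (\<Sum>a<d. (cmod (w (2*a)))^2)" and "y \<equiv> (\<Sum>a<d. (cmod (w (2*a+1)))^2)"
    and "z \<equiv> (cmod (\<Sum>a<d. w (2*a) * cnj (w (2*a+1))))^2"
  shows "mtrace 2 (mmul 2 G G) = complex_of_real (x^2 + y^2 + 2*z)"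
    "mtrace 2 (mmul 2 (mmul 2 G G) (mmul 2 G G)) = complex_of_real ((x^2 + y^2 + 2*z)^2 - 2 * (x*y - z)^2)"
proof -
  define c where "c = (\<Sum>a<d. w (2*a) * cnj (w (2*a+1)))"
  have g00: "G 0 0 = complex_of_real x"
    unfolding G_def Xm_def x_def of_real_sum complex_norm_square by simp
  have g11: "G 1 1 = complex_of_real y"
    unfolding G_def Xm_def y_def of_real_sum complex_norm_square by simp
  have g01: "G 0 1 = c" unfolding G_def Xm_def c_def by simp
  have g10: "G 1 0 = cnj c" unfolding G_def Xm_def c_def cnj_sum by (simp add: mult.commute)
  have cc: "c * cnj c = complex_of_real z"
    unfolding z_def c_def complex_norm_square ..
  have cc': "cnj c * c = complex_of_real z" using cc by (simp add: mult.commute)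
  have e: "(complex_of_real x * c + c * complex_of_real y) * (cnj c * complex_of_real x + complex_of_real y * cnj c)
     = (complex_of_real x + complex_of_real y)^2 * complex_of_real z"
    unfolding cc[symmetric] by (simp add: power2_eq_square algebra_simps)
  show "mtrace 2 (mmul 2 G G) = complex_of_real (x^2 + y^2 + 2*z)"
    unfolding mtrace_def mmul_def sum2 g00 g11 g01 g10
    using cc by (simp add: power2_eq_square algebra_simps)
  show "mtrace 2 (mmul 2 (mmul 2 G G) (mmul 2 G G)) = complex_of_real ((x^2 + y^2 + 2*z)^2 - 2 * (x*y - z)^2)"
    unfolding mtrace_def mmul_def sum2 g00 g11 g01 g10
    using cc cc' e by (simp add: power2_eq_square algebra_simps)
qed


theorem propositionS2:
  fixes n :: nat and \<rho> \<sigma>h H :: cmat and D :: "cmat set" and \<theta> :: real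
  assumes "n \<ge> 1"
    and "pure_state (2^n) \<rho>"
    and "pure_state (2^n) \<sigma>h"
    and "\<forall>i<2^(n-1). \<forall>j<2^(n-1). ptrace_last \<rho> i j = ptrace_last \<sigma>h i j"
    and "is_pauli H"
    and "unitary_design 2 D"
  shows "expect2 D (\<lambda>Up Um. dC_n n \<rho> \<sigma>h H Up Um \<theta>) = 0 \<and>
         16/27 \<le> variance2 D (\<lambda>Up Um. dC_n n \<rho> \<sigma>h H Up Um \<theta>) \<and>
         variance2 D (\<lambda>Up Um. dC_n n \<rho> \<sigma>h H Up Um \<theta>) \<le> 8/9"
proof -
  obtain v where v1: "(\<Sum>i<2^n. (cmod (v i))\<^sup>2) = 1" and v2: "\<forall>i<2^n. \<forall>j<2^n. \<rho> i j = v i * cnj (v j)"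
    using assms(2) unfolding pure_state_def by blast
  obtain w where w1: "(\<Sum>i<2^n. (cmod (w i))\<^sup>2) = 1" and w2: "\<forall>i<2^n. \<forall>j<2^n. \<sigma>h i j = w i * cnj (w j)"
    using assms(3) unfolding pure_state_def by blast
  define d where "d = (2::nat)^(n-1)"
  have N: "(2::nat)^n = 2*d" using assms(1) unfolding d_def by (cases n) auto
  have hv: "\<forall>i<2*d. \<forall>j<2*d. \<rho> i j = v i * cnj (v j)" using v2 N by simp
  have hw: "\<forall>i<2*d. \<forall>j<2*d. \<sigma>h i j = w i * cnj (w j)" using w2 N by simp
  have nv: "(\<Sum>i<2*d. v i * cnj (v i)) = 1"
  proof -
    have "(\<Sum>i<2*d. v i * cnj (v i)) = complex_of_real (\<Sum>i<2^n. (cmod (v i))\<^sup>2)"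
      unfolding N of_real_sum complex_norm_square ..
    then show ?thesis using v1 by simp
  qed
  have nw: "(\<Sum>i<2*d. w i * cnj (w i)) = 1"
  proof -
    have "(\<Sum>i<2*d. w i * cnj (w i)) = complex_of_real (\<Sum>i<2^n. (cmod (w i))\<^sup>2)"
      unfolding N of_real_sum complex_norm_square ..
    then show ?thesis using w1 by simp
  qed
  have hyp: "\<forall>a<d. \<forall>b<d. (\<Sum>s<2. v (2*b+s) * cnj (v (2*a+s))) = (\<Sum>s<2. w (2*b+s) * cnj (w (2*a+s)))"
  proof (intro allI impI)
    fix a b assume ab: "a < d" "b < d"
    have "ptrace_last \<rho> b a = ptrace_last \<sigma>h b a" using assms(4) ab unfolding d_def by blast
    moreover have "2*a < 2*d" "2*b < 2*d" "2*a+1 < 2*d" "2*b+1 < 2*d" using ab by auto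
    ultimately show "(\<Sum>s<2. v (2*b+s) * cnj (v (2*a+s))) = (\<Sum>s<2. w (2*b+s) * cnj (w (2*a+s)))"
      unfolding ptrace_last_def sum2 using hv hw by simp
  qed
  have fin: "finite D" and ne: "D \<noteq> {}" and un: "\<And>U. U \<in> D \<Longrightarrow> unitary2 U"
    using assms(6) unfolding unitary_design_def by auto
  define X where "X = Xm d v w"
  have mX: "mat2 X" unfolding X_def mat2_def Xm_def by auto
  define P where "P = mmul 2 X (adj X)"
  define R where "R = pauli_rot H \<theta>"
  have mR: "mat2 R" unfolding R_def by (rule mat2_rot)
  have uR: "\<forall>i<2. \<forall>j<2. mmul 2 (adj R) R i j = idm i j"
    using unitary2_rot[OF assms(5)] unfolding R_def unitary2_def by auto
  define g where "g = (\<lambda>Up Um. dC_n n \<rho> \<sigma>h H Up Um \<theta>)"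
  define Yf where "Yf Um = mmul 2 R (mmul 2 Um X)" for Um
  define Zf where "Zf Um = mmul 2 R (mmul 2 H (mmul 2 Um X))" for Um
  have mQ: "mat2 (mmul 2 Um X)" if "Um \<in> D" for Um
    using un[OF that] mX unfolding unitary2_def by (intro mat2_mmul) auto
  have gf: "complex_of_real (g Up Um) =
      2 * \<i> * (cnj (trU Up (Yf Um)) * trU Up (Zf Um) - trU Up (Yf Um) * cnj (trU Up (Zf Um)))"
    if "Up \<in> D" "Um \<in> D" for Up Um
    unfolding g_def Yf_def Zf_def R_def X_def
    by (rule dC_eq[OF N hv hw nv nw un[OF that(1)] un[OF that(2)] assms(5)])
  have E1: "expect2 D g = 0"
  proof -
    have "complex_of_real (expect2 D g) = avgD D (\<lambda>Um. avgD D (\<lambda>Up. complex_of_real (g Up Um)))"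
      by (rule expect2_avg)
    also have "\<dots> = avgD D (\<lambda>Um. 0)"
    proof (rule avgD_cong)
      fix Um assume Um: "Um \<in> D"
      have "avgD D (\<lambda>Up. complex_of_real (g Up Um)) =
        avgD D (\<lambda>Up. 2 * \<i> * (cnj (trU Up (Yf Um)) * trU Up (Zf Um) - trU Up (Yf Um) * cnj (trU Up (Zf Um))))"
        by (rule avgD_cong) (rule gf[OF _ Um])
      also have "\<dots> = 0"
        by (rule mean_zero[OF assms(6)]) (unfold Yf_def Zf_def, rule tr_sym[OF mR uR assms(5) mQ[OF Um]])
      finally show "avgD D (\<lambda>Up. complex_of_real (g Up Um)) = 0" .
    qed
    also have "\<dots> = 0" by (rule avgD_const[OF fin ne])
    finally show ?thesis by simp
  qed
  have E2: "complex_of_real (expect2 D (\<lambda>Up Um. (g Up Um)^2)) =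
      40/9 * (mtrace 2 P)^2 - 32/9 * mtrace 2 (mmul 2 P P)"
  proof -
    have "complex_of_real (expect2 D (\<lambda>Up Um. (g Up Um)^2)) =
       avgD D (\<lambda>Um. avgD D (\<lambda>Up. complex_of_real ((g Up Um)^2)))"
      by (rule expect2_avg)
    also have "\<dots> = avgD D (\<lambda>Um. 4 * (mtrace 2 P)^2 - 8/3 * mtrace 2 (mmul 2 P P)
                     - 4/3 * (trAUB Um H P * trAUB Um H P))"
    proof (rule avgD_cong)
      fix Um assume Um: "Um \<in> D"
      have "avgD D (\<lambda>Up. complex_of_real ((g Up Um)^2)) =
        avgD D (\<lambda>Up. (2 * \<i> * (cnj (trU Up (Yf Um)) * trU Up (Zf Um) - trU Up (Yf Um) * cnj (trU Up (Zf Um))))^2)"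
        by (rule avgD_cong) (simp only: of_real_power gf[OF _ Um])
      also have "\<dots> = -4 * (Phi (Zf Um) (Zf Um) (Yf Um) (Yf Um) - 2 * Phi (Yf Um) (Zf Um) (Yf Um) (Zf Um)
                        + Phi (Yf Um) (Yf Um) (Zf Um) (Zf Um))"
        by (rule second_moment[OF assms(6)])
      also have "\<dots> = 4 * (mtrace 2 (mmul 2 (mmul 2 Um X) (adj (mmul 2 Um X))))^2
          - 8/3 * mtrace 2 (mmul 2 (mmul 2 (mmul 2 Um X) (adj (mmul 2 Um X))) (mmul 2 (mmul 2 Um X) (adj (mmul 2 Um X))))
          - 4/3 * (mtrace 2 (mmul 2 H (mmul 2 (mmul 2 Um X) (adj (mmul 2 Um X)))))^2"
        unfolding Yf_def Zf_def by (rule Phi_reduce[OF mR uR assms(5) mQ[OF Um]])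
      also have "\<dots> = 4 * (mtrace 2 P)^2 - 8/3 * mtrace 2 (mmul 2 P P)
                     - 4/3 * (trAUB Um H P * trAUB Um H P)"
        unfolding P_def K_traces(1,2)[OF un[OF Um] mX] K_traces(3)[OF un[OF Um] mX, where H=H] by (simp add: power2_eq_square)
      finally show "avgD D (\<lambda>Up. complex_of_real ((g Up Um)^2)) = \<dots>" .
    qed
    also have "\<dots> = 4 * (mtrace 2 P)^2 - 8/3 * mtrace 2 (mmul 2 P P)
                     - 4/3 * avgD D (\<lambda>Um. trAUB Um H P * trAUB Um H P)"
      by (simp only: avgD_diff avgD_cmult avgD_const[OF fin ne])
    also have "\<dots> = 40/9 * (mtrace 2 P)^2 - 32/9 * mtrace 2 (mmul 2 P P)"
      unfolding TF3[OF assms(6)] Psi_HP[OF assms(5)] by (simp add: algebra_simps)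
    finally show ?thesis .
  qed
  define x where "x = (\<Sum>a<d. (cmod (w (2*a)))^2)"
  define y where "y = (\<Sum>a<d. (cmod (w (2*a+1)))^2)"
  define z where "z = (cmod (\<Sum>a<d. w (2*a) * cnj (w (2*a+1))))^2"
  have PG: "P = mmul 2 (Xm d w w) (Xm d w w)"
    unfolding P_def X_def by (rule P_eq[OF hyp])
  have T2: "mtrace 2 P = complex_of_real (x^2 + y^2 + 2*z)"
    unfolding PG x_def y_def z_def by (rule G_traces(1))
  have T4: "mtrace 2 (mmul 2 P P) = complex_of_real ((x^2 + y^2 + 2*z)^2 - 2 * (x*y - z)^2)"
    unfolding PG x_def y_def z_def by (rule G_traces(2))
  have var: "variance2 D g = 40/9 * (x^2 + y^2 + 2*z)^2 - 32/9 * ((x^2 + y^2 + 2*z)^2 - 2 * (x*y - z)^2)"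
  proof -
    have "complex_of_real (expect2 D (\<lambda>Up Um. (g Up Um)^2)) =
      complex_of_real (40/9 * (x^2 + y^2 + 2*z)^2 - 32/9 * ((x^2 + y^2 + 2*z)^2 - 2 * (x*y - z)^2))"
      unfolding E2 T2 T4 by simp
    then have "expect2 D (\<lambda>Up Um. (g Up Um)^2) = 40/9 * (x^2 + y^2 + 2*z)^2 - 32/9 * ((x^2 + y^2 + 2*z)^2 - 2 * (x*y - z)^2)"
      using of_real_eq_iff by blast
    then show ?thesis unfolding variance2_def E1 by simp
  qed
  have x0: "x \<ge> 0" unfolding x_def by (intro sum_nonneg) simp
  have y0: "y \<ge> 0" unfolding y_def by (intro sum_nonneg) simp
  have z0: "z \<ge> 0" unfolding z_def by simp
  have xy1: "x + y = 1"
  proof -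
    have "complex_of_real (x + y) = (\<Sum>i<2*d. w i * cnj (w i))"
      unfolding x_def y_def sum_split2 of_real_add of_real_sum complex_norm_square
      by (simp add: sum.distrib)
    then show ?thesis using nw by (metis of_real_1 of_real_eq_iff)
  qed
  have zxy: "z \<le> x * y"
    unfolding x_def y_def z_def by (rule cauchy_schwarz_c)
  show ?thesis
    using final_ineq[OF x0 y0 xy1 z0 zxy] E1 var unfolding g_def by simp
qed


end
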